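(* For every $\kappa\ge 2$, for the $\kappa$-state GM+I model on binary 4-taxon trees (the three trees $T_{ab|cd}$, $T_{ac|bd}$, $T_{ad|bc}$ on taxa $a,b,c,d$), the tree parameter is generically identifiable.
   Context: For a binary $n$-taxon tree $T$ (leaves labeled by the taxa, internal vertices of valence 3) with edge set $E$, the $\kappa$-state GM+I model has parameters $\mathbf s=(\delta,\pi_I,\pi_{GM},(M_e)_{e\in E})$: $\delta\in[0,1]$, probability vectors $\pi_I,\pi_{GM}\in[0,1]^\kappa$ ($\pi_{GM}$ the distribution at a chosen root $r$), and $\kappa\times\kappa$ Markov matrices $M_e$ for edges directed away from $r$. These form a stochastic parameter space $S_T\subseteq\mathbb R^N$, $N=2\kappa-1+|E|\kappa(\kappa-1)$. The joint leaf distribution $P=\phi_T(\mathbf s)$ has entries $p_{i_1\dots i_n}=\delta\,\epsilon(i_1,\dots,i_n)\pi_I(i_1)+(1-\delta)\sum_{(j_v)}\pi_{GM}(j_r)\prod_{e=(u\to w)}M_e(j_u,j_w)$, with $\epsilon=1$ if all indices equal and $0$ otherwise, the sum over all state assignments to vertices extending the leaf states. The tree parameter is generically identifiable for a collection of trees if for each tree $T$ there is a proper algebraic variety $X_T\subsetneq\mathbb C^N$ such that whenever $P\in\bigcup_T\phi_T(S_T\setminus X_T)$, there is a unique tree $T$ with $P\in\phi_T(S_T\setminus X_T)$. *)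

theory Defs
  imports Complex_Main
begin

definition rspace :: "nat \<Rightarrow> (nat \<Rightarrow> real) set" where
  "rspace N = {x. \<forall>i\<ge>N. x i = 0}"

definition cspace :: "nat \<Rightarrow> (nat \<Rightarrow> complex) set" where
  "cspace N = {z. \<forall>i\<ge>N. z i = 0}"

definition cvec :: "(nat \<Rightarrow> real) \<Rightarrow> (nat \<Rightarrow> complex)" where
  "cvec x = (\<lambda>i. complex_of_real (x i))"

inductive poly_fun :: "nat \<Rightarrow> ((nat \<Rightarrow> complex) \<Rightarrow> complex) \<Rightarrow> bool" for N where
  pf_const: "poly_fun N (\<lambda>z. c)"
| pf_var: "i < N \<Longrightarrow> poly_fun N (\<lambda>z. z i)"
| pf_add: "poly_fun N f \<Longrightarrow> poly_fun N g \<Longrightarrow> poly_fun N (\<lambda>z. f z + g z)"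
| pf_mult: "poly_fun N f \<Longrightarrow> poly_fun N g \<Longrightarrow> poly_fun N (\<lambda>z. f z * g z)"

definition alg_variety :: "nat \<Rightarrow> (nat \<Rightarrow> complex) set \<Rightarrow> bool" where
  "alg_variety N X \<longleftrightarrow>
     (\<exists>F. (\<forall>f\<in>F. poly_fun N f) \<and> X = {z \<in> cspace N. \<forall>f\<in>F. f z = 0})"

definition proper_variety :: "nat \<Rightarrow> (nat \<Rightarrow> complex) set \<Rightarrow> bool" where
  "proper_variety N X \<longleftrightarrow> alg_variety N X \<and> X \<subset> cspace N"

text \<open>Taxa a,b,c,d are 0,1,2,3. States are 0..kappa-1.\<close>

datatype quartet = T_ab_cd | T_ac_bd | T_ad_bc

text \<open>For tree xy|zw, returns the taxa (x,y,z,w) with x = a.\<close>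
fun qtaxa :: "quartet \<Rightarrow> nat \<times> nat \<times> nat \<times> nat" where
  "qtaxa T_ab_cd = (0, 1, 2, 3)"
| "qtaxa T_ac_bd = (0, 2, 1, 3)"
| "qtaxa T_ad_bc = (0, 3, 1, 2)"

text \<open>Number of free (stochastic) parameters: N = 2 kappa - 1 + |E| kappa (kappa - 1), |E| = 5.\<close>
definition nparams :: "nat \<Rightarrow> nat" where
  "nparams \<kappa> = 2 * \<kappa> - 1 + 5 * (\<kappa> * (\<kappa> - 1))"

text \<open>A probability vector stored with kappa-1 free coordinates starting at offset off;
  the last entry is 1 minus the others.\<close>
definition vecdec :: "nat \<Rightarrow> nat \<Rightarrow> (nat \<Rightarrow> real) \<Rightarrow> nat \<Rightarrow> real" where
  "vecdec \<kappa> off x i =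
     (if i < \<kappa> - 1 then x (off + i) else 1 - (\<Sum>j<\<kappa> - 1. x (off + j)))"

text \<open>Coordinates: x 0 = delta; pi_I at offset 1; pi_GM at offset kappa;
  Markov matrix of edge e (e < 5) at offset 2 kappa - 1 + e kappa (kappa-1), row-major,
  each row with kappa-1 free coordinates.\<close>
definition gm_delta :: "(nat \<Rightarrow> real) \<Rightarrow> real" where
  "gm_delta x = x 0"

definition gm_piI :: "nat \<Rightarrow> (nat \<Rightarrow> real) \<Rightarrow> nat \<Rightarrow> real" where
  "gm_piI \<kappa> x i = vecdec \<kappa> 1 x i"

definition gm_piGM :: "nat \<Rightarrow> (nat \<Rightarrow> real) \<Rightarrow> nat \<Rightarrow> real" where
  "gm_piGM \<kappa> x i = vecdec \<kappa> \<kappa> x i"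

definition gm_M :: "nat \<Rightarrow> (nat \<Rightarrow> real) \<Rightarrow> nat \<Rightarrow> nat \<Rightarrow> nat \<Rightarrow> real" where
  "gm_M \<kappa> x e i j = vecdec \<kappa> (2 * \<kappa> - 1 + e * (\<kappa> * (\<kappa> - 1)) + i * (\<kappa> - 1)) x j"

definition stoch_params :: "nat \<Rightarrow> (nat \<Rightarrow> real) set" where
  "stoch_params \<kappa> = {x \<in> rspace (nparams \<kappa>).
      0 \<le> gm_delta x \<and> gm_delta x \<le> 1 \<and>
      (\<forall>i<\<kappa>. 0 \<le> gm_piI \<kappa> x i \<and> gm_piI \<kappa> x i \<le> 1) \<and>
      (\<forall>i<\<kappa>. 0 \<le> gm_piGM \<kappa> x i \<and> gm_piGM \<kappa> x i \<le> 1) \<and>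
      (\<forall>e<5. \<forall>i<\<kappa>. \<forall>j<\<kappa>. 0 \<le> gm_M \<kappa> x e i j \<and> gm_M \<kappa> x e i j \<le> 1)}"

text \<open>Tree xy|zw rooted at the internal vertex u adjacent to x,y; v is the other internal
  vertex. Edges (directed away from u): 0: u->x, 1: u->y, 2: u->v, 3: v->z, 4: v->w.\<close>
definition gm_phi :: "nat \<Rightarrow> quartet \<Rightarrow> (nat \<Rightarrow> real) \<Rightarrow> (nat \<times> nat \<times> nat \<times> nat \<Rightarrow> real)" where
  "gm_phi \<kappa> T x = (\<lambda>(ia, ib, ic, id).
     if ia < \<kappa> \<and> ib < \<kappa> \<and> ic < \<kappa> \<and> id < \<kappa> then
       (let st = (\<lambda>t::nat. if t = 0 then ia else if t = 1 then ib else if t = 2 then ic else id);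
            (tx, ty, tz, tw) = qtaxa T
        in gm_delta x * (if ia = ib \<and> ib = ic \<and> ic = id then 1 else 0) * gm_piI \<kappa> x ia
           + (1 - gm_delta x) *
             (\<Sum>ju<\<kappa>. \<Sum>jv<\<kappa>. gm_piGM \<kappa> x ju * gm_M \<kappa> x 0 ju (st tx) * gm_M \<kappa> x 1 ju (st ty)
                 * gm_M \<kappa> x 2 ju jv * gm_M \<kappa> x 3 jv (st tz) * gm_M \<kappa> x 4 jv (st tw)))
     else 0)"

definition gm_image :: "nat \<Rightarrow> quartet \<Rightarrow> (nat \<Rightarrow> complex) set \<Rightarrow> (nat \<times> nat \<times> nat \<times> nat \<Rightarrow> real) set" where
  "gm_image \<kappa> T X = gm_phi \<kappa> T ` {x \<in> stoch_params \<kappa>. cvec x \<notin> X}"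

end

theory Submission imports Defs "Jordan_Normal_Form.Determinant" begin

definition gvec :: "nat \<Rightarrow> nat \<Rightarrow> (nat \<Rightarrow> 'a::comm_ring_1) \<Rightarrow> nat \<Rightarrow> 'a" where
  "gvec \<kappa> off z i = (if i < \<kappa> - 1 then z (off + i) else 1 - (\<Sum>j<\<kappa> - 1. z (off + j)))"

definition gM :: "nat \<Rightarrow> (nat \<Rightarrow> 'a::comm_ring_1) \<Rightarrow> nat \<Rightarrow> nat \<Rightarrow> nat \<Rightarrow> 'a" where
  "gM \<kappa> z e i j = gvec \<kappa> (2 * \<kappa> - 1 + e * (\<kappa> * (\<kappa> - 1)) + i * (\<kappa> - 1)) z j"

definition gphi :: "nat \<Rightarrow> quartet \<Rightarrow> (nat \<Rightarrow> 'a::comm_ring_1) \<Rightarrow> (nat \<times> nat \<times> nat \<times> nat \<Rightarrow> 'a)" where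
  "gphi \<kappa> T x = (\<lambda>(ia, ib, ic, id).
     if ia < \<kappa> \<and> ib < \<kappa> \<and> ic < \<kappa> \<and> id < \<kappa> then
       (let st = (\<lambda>t::nat. if t = 0 then ia else if t = 1 then ib else if t = 2 then ic else id);
            (tx, ty, tz, tw) = qtaxa T
        in x 0 * (if ia = ib \<and> ib = ic \<and> ic = id then 1 else 0) * gvec \<kappa> 1 x ia
           + (1 - x 0) *
             (\<Sum>ju<\<kappa>. \<Sum>jv<\<kappa>. gvec \<kappa> \<kappa> x ju * gM \<kappa> x 0 ju (st tx) * gM \<kappa> x 1 ju (st ty)
                 * gM \<kappa> x 2 ju jv * gM \<kappa> x 3 jv (st tz) * gM \<kappa> x 4 jv (st tw)))
     else 0)"

lemma gm_phi_gphi: "gm_phi \<kappa> T x = gphi \<kappa> T x"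
  unfolding gm_phi_def gphi_def gm_delta_def gm_piI_def gm_piGM_def gm_M_def gM_def gvec_def vecdec_def
  by simp

lemma gvec_of_real: "gvec \<kappa> off (cvec x) i = complex_of_real (gvec \<kappa> off x i)"
  by (simp add: gvec_def cvec_def)

lemma gM_of_real: "gM \<kappa> (cvec x) e i j = complex_of_real (gM \<kappa> x e i j)"
  by (simp add: gM_def gvec_of_real)

lemma gphi_of_real: "gphi \<kappa> T (cvec x) s = complex_of_real (gphi \<kappa> T x s)"
  by (cases T; cases s) (simp_all add: gphi_def gvec_of_real gM_of_real, simp_all add: cvec_def)

fun assign :: "quartet \<Rightarrow> nat \<times> nat \<Rightarrow> nat \<times> nat \<Rightarrow> nat \<times> nat \<times> nat \<times> nat" where
  "assign T_ab_cd (r1, r2) (c1, c2) = (r1, r2, c1, c2)"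
| "assign T_ac_bd (r1, r2) (c1, c2) = (r1, c1, r2, c2)"
| "assign T_ad_bc (r1, r2) (c1, c2) = (r1, c1, c2, r2)"

lemma gphi_assign:
  assumes "p1 < \<kappa>" "p2 < \<kappa>" "q1 < \<kappa>" "q2 < \<kappa>"
  shows "gphi \<kappa> T z (assign T (p1,p2) (q1,q2)) =
    z 0 * (if p1 = p2 \<and> p2 = q1 \<and> q1 = q2 then 1 else 0) * gvec \<kappa> 1 z p1 + (1 - z 0) *
    (\<Sum>ju<\<kappa>. \<Sum>jv<\<kappa>. gvec \<kappa> \<kappa> z ju * gM \<kappa> z 0 ju p1 * gM \<kappa> z 1 ju p2
        * gM \<kappa> z 2 ju jv * gM \<kappa> z 3 jv q1 * gM \<kappa> z 4 jv q2)"
  using assms by (cases T) (simp_all add: gphi_def)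


definition validm :: "nat \<Rightarrow> (nat \<Rightarrow> nat \<times> nat) \<Rightarrow> (nat \<Rightarrow> nat \<times> nat) \<Rightarrow> bool" where
  "validm \<kappa> r c \<longleftrightarrow> (\<forall>k\<le>\<kappa>. fst (r k) < \<kappa> \<and> snd (r k) < \<kappa> \<and> fst (c k) < \<kappa> \<and> snd (c k) < \<kappa>)
     \<and> (\<forall>k\<le>\<kappa>. \<forall>l\<le>\<kappa>. \<not> (fst (r k) = snd (r k) \<and> r k = c l))"

definition minor :: "nat \<Rightarrow> quartet \<Rightarrow> (nat \<Rightarrow> nat \<times> nat) \<Rightarrow> (nat \<Rightarrow> nat \<times> nat)
   \<Rightarrow> (nat \<times> nat \<times> nat \<times> nat \<Rightarrow> 'a::comm_ring_1) \<Rightarrow> 'a" where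
  "minor \<kappa> T r c Q = det (mat (Suc \<kappa>) (Suc \<kappa>) (\<lambda>(k,l). Q (assign T (r k) (c l))))"

lemma det_last_col_zero:
  assumes "\<And>i. i < Suc n \<Longrightarrow> f (i, n) = (0::'a::comm_ring_1)"
  shows "det (mat (Suc n) (Suc n) f) = 0"
proof -
  have H: "(\<Prod>i = 0..<Suc n. mat (Suc n) (Suc n) f $$ (i, p i)) = 0" if p: "p permutes {0..<Suc n}" for p
  proof -
    have "n \<in> p ` {0..<Suc n}" using permutes_image[OF p] by simp
    then obtain i where i: "i < Suc n" "p i = n" by auto
    have "p i < Suc n" using p i(1) by (meson atLeastLessThan_iff permutes_in_image zero_le)
    have "mat (Suc n) (Suc n) f $$ (i, p i) = 0" using i assms by simp
    then show ?thesis using i(1) by (intro prod_zero) auto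
  qed
  show ?thesis unfolding det_def'[OF mat_carrier]
    by (intro sum.neutral ballI) (metis mult_zero_right mem_Collect_eq H)
qed

lemma minor_vanish:
  fixes z :: "nat \<Rightarrow> 'a::comm_ring_1"
  assumes v: "validm \<kappa> r c"
  shows "minor \<kappa> T r c (gphi \<kappa> T z) = 0"
proof -
  let ?n = "Suc \<kappa>"
  define a where "a p j = (1 - z 0) * gvec \<kappa> \<kappa> z j * gM \<kappa> z 0 j (fst p) * gM \<kappa> z 1 j (snd p)" for p j
  define b where "b j q = (\<Sum>jv<\<kappa>. gM \<kappa> z 2 j jv * gM \<kappa> z 3 jv (fst q) * gM \<kappa> z 4 jv (snd q))" for j q
  define A where "A = mat ?n ?n (\<lambda>(k,j). if j < \<kappa> then a (r k) j else 0)"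
  define B where "B = mat ?n ?n (\<lambda>(j,l). if j < \<kappa> then b j (c l) else 0)"
  have entry: "gphi \<kappa> T z (assign T (r k) (c l)) = (\<Sum>j<\<kappa>. a (r k) j * b j (c l))"
    if k: "k < ?n" and l: "l < ?n" for k l
  proof -
    obtain p1 p2 where rk: "r k = (p1, p2)" by fastforce
    obtain q1 q2 where cl: "c l = (q1, q2)" by fastforce
    have rng: "p1 < \<kappa>" "p2 < \<kappa>" "q1 < \<kappa>" "q2 < \<kappa>"
      using v k l rk cl unfolding validm_def by (metis fst_conv snd_conv less_Suc_eq_le)+
    have nd: "\<not> (p1 = p2 \<and> p2 = q1 \<and> q1 = q2)"
      using v k l rk cl unfolding validm_def by (metis fst_conv snd_conv less_Suc_eq_le)
    show ?thesis
      unfolding rk cl gphi_assign[OF rng] if_not_P[OF nd]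
      by (simp add: a_def b_def sum_distrib_left mult_ac)
  qed
  have AB: "mat ?n ?n (\<lambda>(k,l). gphi \<kappa> T z (assign T (r k) (c l))) = A * B"
  proof (rule eq_matI)
    fix i j assume i: "i < dim_row (A * B)" and j: "j < dim_col (A * B)"
    then have i': "i < ?n" and j': "j < ?n" by (simp_all add: A_def B_def)
    have "(A * B) $$ (i, j) = (\<Sum>k<?n. A $$ (i,k) * B $$ (k,j))"
      using i' j' by (simp add: A_def B_def scalar_prod_def atLeast0LessThan)
    also have "\<dots> = (\<Sum>k<\<kappa>. a (r i) k * b k (c j))"
      using i' j' by (simp add: A_def B_def)
    finally show "mat ?n ?n (\<lambda>(k,l). gphi \<kappa> T z (assign T (r k) (c l))) $$ (i, j) = (A * B) $$ (i, j)"
      using i' j' entry by simp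
  qed (simp_all add: A_def B_def)
  have "det A = 0" unfolding A_def by (rule det_last_col_zero) simp
  moreover have "det (A * B) = det A * det B" by (rule det_mult) (auto simp: A_def B_def)
  ultimately show ?thesis
    unfolding minor_def AB by simp
qed


definition cz :: "nat \<Rightarrow> (nat \<Rightarrow> complex) \<Rightarrow> nat \<Rightarrow> complex" where
  "cz N z i = (if i < N then z i else 0)"

lemma pf_cz: "poly_fun N (\<lambda>z. cz N z i)"
proof (cases "i < N")
  case True then show ?thesis by (simp add: cz_def pf_var)
next
  case False then show ?thesis by (simp add: cz_def pf_const)
qed

lemma pf_sum: "finite A \<Longrightarrow> (\<And>a. a \<in> A \<Longrightarrow> poly_fun N (f a)) \<Longrightarrow> poly_fun N (\<lambda>z. \<Sum>a\<in>A. f a z)"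
proof (induction A rule: finite_induct)
  case empty then show ?case by (simp add: pf_const)
next
  case (insert x F) then show ?case by (simp add: pf_add)
qed

lemma pf_prod: "finite A \<Longrightarrow> (\<And>a. a \<in> A \<Longrightarrow> poly_fun N (f a)) \<Longrightarrow> poly_fun N (\<lambda>z. \<Prod>a\<in>A. f a z)"
proof (induction A rule: finite_induct)
  case empty then show ?case by (simp add: pf_const)
next
  case (insert x F) then show ?case by (simp add: pf_mult)
qed

lemma pf_diff: "poly_fun N f \<Longrightarrow> poly_fun N g \<Longrightarrow> poly_fun N (\<lambda>z. f z - g z)"
proof -
  assume f: "poly_fun N f" and g: "poly_fun N g"
  have "poly_fun N (\<lambda>z. f z + (- 1) * g z)"
    by (intro pf_add pf_mult f g pf_const)
  then show ?thesis by simp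
qed

lemma pf_if: "poly_fun N f \<Longrightarrow> poly_fun N g \<Longrightarrow> poly_fun N (\<lambda>z. if b then f z else g z)"
  by (cases b) simp_all

lemma pf_gvec: "poly_fun N (\<lambda>z. gvec \<kappa> off (cz N z) i)"
  unfolding gvec_def by (intro pf_if pf_diff pf_sum pf_cz pf_const) auto

lemma pf_gM: "poly_fun N (\<lambda>z. gM \<kappa> (cz N z) e i j)"
  unfolding gM_def by (rule pf_gvec)

lemma pf_gphi: "poly_fun N (\<lambda>z. gphi \<kappa> T (cz N z) s)"
proof -
  obtain ia ib ic id where s: "s = (ia, ib, ic, id)" by (cases s) auto
  obtain tx ty tz tw where q: "qtaxa T = (tx, ty, tz, tw)" by (cases "qtaxa T") auto
  show ?thesis
    unfolding s gphi_def q Let_def prod.case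
    by (intro pf_if pf_add pf_mult pf_diff pf_sum pf_gvec pf_gM pf_cz pf_const finite_lessThan)
qed

lemma pf_det: "(\<And>i j. i < n \<Longrightarrow> j < n \<Longrightarrow> poly_fun N (\<lambda>z. f z (i, j))) \<Longrightarrow>
   poly_fun N (\<lambda>z. det (mat n n (f z)))"
  unfolding det_def'[OF mat_carrier]
proof (intro pf_sum pf_mult pf_prod pf_const finite_permutations finite_atLeastLessThan)
  fix p i assume H: "\<And>i j. i < n \<Longrightarrow> j < n \<Longrightarrow> poly_fun N (\<lambda>z. f z (i, j))"
    and p: "p \<in> {p. p permutes {0..<n}}" and i: "i \<in> {0..<n}"
  have "p i < n" using p i by (simp add: permutes_in_image)
  then show "poly_fun N (\<lambda>z. mat n n (f z) $$ (i, p i))" using H i by simp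
qed

lemma pf_minor: "poly_fun N (\<lambda>z. minor \<kappa> T' r c (gphi \<kappa> T (cz N z)))"
  unfolding minor_def by (rule pf_det) (simp add: pf_gphi)


definition sg :: "nat \<Rightarrow> nat \<Rightarrow> nat" where "sg \<kappa> a = (if Suc a = \<kappa> then 0 else Suc a)"
definition sgi :: "nat \<Rightarrow> nat \<Rightarrow> nat" where "sgi \<kappa> a = (if a = 0 then \<kappa> - 1 else a - 1)"

definition Mdes :: "nat \<Rightarrow> nat \<Rightarrow> nat \<Rightarrow> nat \<Rightarrow> real" where
  "Mdes \<kappa> e i j = (if e = 2 then 1 / real \<kappa> else if e = 1 \<or> e = 4 then (if j = sg \<kappa> i then 1 else 0)
      else (if j = i then 1 else 0))"

definition x0 :: "nat \<Rightarrow> nat \<Rightarrow> real" where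
  "x0 \<kappa> n = (if 2 * \<kappa> - 1 \<le> n \<and> n < nparams \<kappa> then
      Mdes \<kappa> ((n - (2 * \<kappa> - 1)) div (\<kappa> * (\<kappa> - 1)))
        (((n - (2 * \<kappa> - 1)) mod (\<kappa> * (\<kappa> - 1))) div (\<kappa> - 1))
        (((n - (2 * \<kappa> - 1)) mod (\<kappa> * (\<kappa> - 1))) mod (\<kappa> - 1))
     else if \<kappa> \<le> n \<and> n < 2 * \<kappa> - 1 then 1 / real \<kappa> else 0)"

lemma sg_lt: "a < \<kappa> \<Longrightarrow> sg \<kappa> a < \<kappa>" by (simp add: sg_def)

lemma Mdes_rowsum: "2 \<le> \<kappa> \<Longrightarrow> i < \<kappa> \<Longrightarrow> (\<Sum>j<\<kappa>. Mdes \<kappa> e i j) = 1"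
proof -
  assume k: "2 \<le> \<kappa>" and i: "i < \<kappa>"
  have d: "(\<Sum>j<\<kappa>. if j = a then (1::real) else 0) = 1" if "a < \<kappa>" for a
    using that by (simp add: sum.delta)
  show ?thesis
  proof (cases "e = 2")
    case True then show ?thesis using k by (simp add: Mdes_def)
  next
    case False
    show ?thesis
    proof (cases "e = 1 \<or> e = 4")
      case True then show ?thesis using False d[OF sg_lt[OF i]] unfolding Mdes_def by presburger
    next
      case F2: False then show ?thesis using False d[OF i] unfolding Mdes_def by presburger
    qed
  qed
qed

lemma divmod_aux: "t < (K::nat) \<Longrightarrow> (e * K + t) div K = e \<and> (e * K + t) mod K = t"
  by simp

lemma x0_M:
  assumes k: "2 \<le> \<kappa>" and e: "e < 5" and i: "i < \<kappa>" and j: "j < \<kappa>"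
  shows "gM \<kappa> (x0 \<kappa>) e i j = Mdes \<kappa> e i j"
proof -
  define K where "K = \<kappa> * (\<kappa> - 1)"
  define off where "off = 2 * \<kappa> - 1 + e * (\<kappa> * (\<kappa> - 1)) + i * (\<kappa> - 1)"
  have first: "x0 \<kappa> (off + j') = Mdes \<kappa> e i j'" if j': "j' < \<kappa> - 1" for j'
  proof -
    have t: "i * (\<kappa> - 1) + j' < K"
    proof -
      have "i * (\<kappa> - 1) + j' < (i + 1) * (\<kappa> - 1)" using j' by simp
      also have "\<dots> \<le> \<kappa> * (\<kappa> - 1)" using i by (intro mult_right_mono) auto
      finally show ?thesis by (simp add: K_def)
    qed
    have m: "off + j' - (2 * \<kappa> - 1) = e * K + (i * (\<kappa> - 1) + j')" by (simp add: off_def K_def)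
    have ge: "2 * \<kappa> - 1 \<le> off + j'" by (simp add: off_def)
    have lt: "e * K + (i * (\<kappa> - 1) + j') < 5 * K"
    proof -
      have "e * K + (i * (\<kappa> - 1) + j') < e * K + K" using t by simp
      also have "\<dots> = (e + 1) * K" by simp
      also have "\<dots> \<le> 5 * K" using e by (intro mult_right_mono) auto
      finally show ?thesis .
    qed
    have np: "nparams \<kappa> = 2 * \<kappa> - 1 + 5 * K" by (simp add: nparams_def K_def)
    have d1: "(e * K + (i * (\<kappa> - 1) + j')) div K = e" "(e * K + (i * (\<kappa> - 1) + j')) mod K = i * (\<kappa> - 1) + j'"
      using divmod_aux[OF t] by auto
    have d2: "(i * (\<kappa> - 1) + j') div (\<kappa> - 1) = i" "(i * (\<kappa> - 1) + j') mod (\<kappa> - 1) = j'"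
      using divmod_aux[OF j', of i] by auto
    have lt2: "off + j' < nparams \<kappa>" using lt np m ge by linarith
    have "x0 \<kappa> (off + j') = Mdes \<kappa> ((off + j' - (2 * \<kappa> - 1)) div K)
        (((off + j' - (2 * \<kappa> - 1)) mod K) div (\<kappa> - 1)) (((off + j' - (2 * \<kappa> - 1)) mod K) mod (\<kappa> - 1))"
      unfolding x0_def K_def using ge lt2 by simp
    also have "\<dots> = Mdes \<kappa> e i j'" unfolding m d1 d2 ..
    finally show ?thesis .
  qed
  show ?thesis
  proof (cases "j < \<kappa> - 1")
    case True
    then show ?thesis unfolding gM_def gvec_def off_def[symmetric] using first[OF True] by simp
  next
    case False
    then have jj: "j = \<kappa> - 1" using j by simp
    have s1: "(\<Sum>j<\<kappa> - 1. x0 \<kappa> (off + j)) = (\<Sum>j<\<kappa> - 1. Mdes \<kappa> e i j)"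
      using first by (intro sum.cong) auto
    have s2: "(\<Sum>j<\<kappa>. Mdes \<kappa> e i j) = (\<Sum>j<\<kappa> - 1. Mdes \<kappa> e i j) + Mdes \<kappa> e i (\<kappa> - 1)"
      using k by (metis Suc_diff_1 less_le_trans pos2 sum.lessThan_Suc)
    have "gM \<kappa> (x0 \<kappa>) e i j = 1 - (\<Sum>j<\<kappa> - 1. x0 \<kappa> (off + j))"
      unfolding gM_def gvec_def off_def[symmetric] using False by simp
    also have "\<dots> = Mdes \<kappa> e i j" unfolding s1 jj using s2 Mdes_rowsum[OF k i, of e] by simp
    finally show ?thesis .
  qed
qed

lemma x0_piGM:
  assumes k: "2 \<le> \<kappa>" and i: "i < \<kappa>"
  shows "gvec \<kappa> \<kappa> (x0 \<kappa>) i = 1 / real \<kappa>"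
proof -
  have f: "x0 \<kappa> (\<kappa> + j) = 1 / real \<kappa>" if "j < \<kappa> - 1" for j
  proof -
    have "\<not> (2 * \<kappa> - 1 \<le> \<kappa> + j)" "\<kappa> + j < 2 * \<kappa> - 1" using that by linarith+
    then show ?thesis by (simp add: x0_def)
  qed
  show ?thesis
  proof (cases "i < \<kappa> - 1")
    case True then show ?thesis by (simp add: gvec_def f)
  next
    case False
    have "(\<Sum>j<\<kappa> - 1. x0 \<kappa> (\<kappa> + j)) = real (\<kappa> - 1) / real \<kappa>" by (simp add: f)
    also have "\<dots> = 1 - 1 / real \<kappa>" using k by (simp add: field_simps of_nat_diff)
    finally show ?thesis using False by (simp add: gvec_def)
  qed
qed

lemma x0_0: "2 \<le> \<kappa> \<Longrightarrow> x0 \<kappa> 0 = 0" by (simp add: x0_def)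


lemma dd_sum: "a < (n::nat) \<Longrightarrow> c < n \<Longrightarrow>
  (\<Sum>ju<n. \<Sum>jv<n. (if ju = a then (if jv = c then Kc else 0) else (0::real))) = Kc"
proof -
  assume a: "a < n" and c: "c < n"
  have i: "(\<Sum>jv<n. (if ju = a then (if jv = c then Kc else 0) else (0::real))) = (if ju = a then Kc else 0)" for ju
  proof (cases "ju = a")
    case True then show ?thesis using c by simp
  next
    case False then show ?thesis by simp
  qed
  show ?thesis unfolding i using a by simp
qed

lemma core_x0:
  assumes k: "2 \<le> \<kappa>" and r: "a < \<kappa>" "b < \<kappa>" "c < \<kappa>" "d < \<kappa>"
  shows "(\<Sum>ju<\<kappa>. \<Sum>jv<\<kappa>. gvec \<kappa> \<kappa> (x0 \<kappa>) ju * gM \<kappa> (x0 \<kappa>) 0 ju a * gM \<kappa> (x0 \<kappa>) 1 ju b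
      * gM \<kappa> (x0 \<kappa>) 2 ju jv * gM \<kappa> (x0 \<kappa>) 3 jv c * gM \<kappa> (x0 \<kappa>) 4 jv d)
    = (if b = sg \<kappa> a \<and> d = sg \<kappa> c then 1 / (real \<kappa> * real \<kappa>) else 0)"
  (is "?L = ?R")
proof -
  let ?K = "if b = sg \<kappa> a \<and> d = sg \<kappa> c then 1 / (real \<kappa> * real \<kappa>) else 0"
  have pt: "gvec \<kappa> \<kappa> (x0 \<kappa>) ju * gM \<kappa> (x0 \<kappa>) 0 ju a * gM \<kappa> (x0 \<kappa>) 1 ju b
      * gM \<kappa> (x0 \<kappa>) 2 ju jv * gM \<kappa> (x0 \<kappa>) 3 jv c * gM \<kappa> (x0 \<kappa>) 4 jv d
     = (if ju = a then (if jv = c then ?K else 0) else 0)" if "ju < \<kappa>" "jv < \<kappa>" for ju jv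
    using that r k by (simp add: x0_M x0_piGM Mdes_def)
  have "?L = (\<Sum>ju<\<kappa>. \<Sum>jv<\<kappa>. (if ju = a then (if jv = c then ?K else 0) else 0))"
    using pt by (intro sum.cong refl) auto
  also have "\<dots> = ?K" by (rule dd_sum[OF r(1) r(3)])
  finally show ?thesis .
qed


fun fpair :: "nat \<Rightarrow> quartet \<Rightarrow> quartet \<Rightarrow> nat \<times> nat \<Rightarrow> nat \<times> nat" where
  "fpair \<kappa> T_ab_cd T_ac_bd (p1, p2) = (sg \<kappa> p1, sg \<kappa> p2)"
| "fpair \<kappa> T_ab_cd T_ad_bc (p1, p2) = (sg \<kappa> p1, sgi \<kappa> p2)"
| "fpair \<kappa> T_ac_bd T_ab_cd (p1, p2) = (sg \<kappa> p1, sg \<kappa> p2)"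
| "fpair \<kappa> T_ac_bd T_ad_bc (p1, p2) = (sgi \<kappa> p2, sg \<kappa> p1)"
| "fpair \<kappa> T_ad_bc T_ab_cd (p1, p2) = (sg \<kappa> p2, sg \<kappa> p1)"
| "fpair \<kappa> T_ad_bc T_ac_bd (p1, p2) = (sgi \<kappa> p2, sg \<kappa> p1)"
| "fpair \<kappa> _ _ p = p"

lemma gphi_x0_gen:
  assumes k: "2 \<le> \<kappa>" and r: "s0 < \<kappa>" "s1 < \<kappa>" "s2 < \<kappa>" "s3 < \<kappa>"
    and q: "qtaxa T = (tx, ty, tz, tw)"
    and st: "st = (\<lambda>t::nat. if t = 0 then s0 else if t = 1 then s1 else if t = 2 then s2 else s3)"
  shows "gphi \<kappa> T (x0 \<kappa>) (s0, s1, s2, s3) =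
    (if st ty = sg \<kappa> (st tx) \<and> st tw = sg \<kappa> (st tz) then 1 / (real \<kappa> * real \<kappa>) else 0)"
proof -
  have str: "st t < \<kappa>" for t using r unfolding st by auto
  have "gphi \<kappa> T (x0 \<kappa>) (s0, s1, s2, s3) = x0 \<kappa> 0 * (if s0 = s1 \<and> s1 = s2 \<and> s2 = s3 then 1 else 0) * gvec \<kappa> 1 (x0 \<kappa>) s0
           + (1 - x0 \<kappa> 0) *
             (\<Sum>ju<\<kappa>. \<Sum>jv<\<kappa>. gvec \<kappa> \<kappa> (x0 \<kappa>) ju * gM \<kappa> (x0 \<kappa>) 0 ju (st tx) * gM \<kappa> (x0 \<kappa>) 1 ju (st ty)
                 * gM \<kappa> (x0 \<kappa>) 2 ju jv * gM \<kappa> (x0 \<kappa>) 3 jv (st tz) * gM \<kappa> (x0 \<kappa>) 4 jv (st tw))"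
    unfolding gphi_def q Let_def prod.case st using r by simp
  also have "\<dots> = (if st ty = sg \<kappa> (st tx) \<and> st tw = sg \<kappa> (st tz) then 1 / (real \<kappa> * real \<kappa>) else 0)"
    unfolding x0_0[OF k] core_x0[OF k str str str str] by simp
  finally show ?thesis .
qed

lemma phi_x0_assign:
  assumes k: "2 \<le> \<kappa>" and TT: "T \<noteq> T'"
    and r: "p1 < \<kappa>" "p2 < \<kappa>" "q1 < \<kappa>" "q2 < \<kappa>"
  shows "gphi \<kappa> T (x0 \<kappa>) (assign T' (p1, p2) (q1, q2)) =
    (if (q1, q2) = fpair \<kappa> T T' (p1, p2) then 1 / (real \<kappa> * real \<kappa>) else 0)"
  using k TT r
  by (cases T; cases T') (simp_all add: gphi_x0_gen[OF k], auto simp: sg_def sgi_def)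


definition rr :: "nat \<Rightarrow> nat \<Rightarrow> nat \<times> nat" where
  "rr \<kappa> k = (if k = 0 then (0, 0) else (k - 1, sg \<kappa> (k - 1)))"

lemma rr_range: "2 \<le> \<kappa> \<Longrightarrow> k \<le> \<kappa> \<Longrightarrow> fst (rr \<kappa> k) < \<kappa> \<and> snd (rr \<kappa> k) < \<kappa>"
  by (auto simp: rr_def sg_def)

lemma fpair_range: "2 \<le> \<kappa> \<Longrightarrow> fst p < \<kappa> \<Longrightarrow> snd p < \<kappa> \<Longrightarrow>
   fst (fpair \<kappa> T T' p) < \<kappa> \<and> snd (fpair \<kappa> T T' p) < \<kappa>"
  by (cases p; cases T; cases T') (auto simp: sg_def sgi_def)

lemma rr_diag: "2 \<le> \<kappa> \<Longrightarrow> k \<le> \<kappa> \<Longrightarrow> fst (rr \<kappa> k) = snd (rr \<kappa> k) \<Longrightarrow> k = 0"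
  by (auto simp: rr_def sg_def split: if_splits)

lemma fpair_rr_nz: "2 \<le> \<kappa> \<Longrightarrow> l \<le> \<kappa> \<Longrightarrow> T \<noteq> T' \<Longrightarrow> fpair \<kappa> T T' (rr \<kappa> l) \<noteq> (0, 0)"
  by (cases T; cases T') (auto simp: rr_def sg_def sgi_def split: if_splits)

lemma fpair_rr_inj: "2 \<le> \<kappa> \<Longrightarrow> k \<le> \<kappa> \<Longrightarrow> l \<le> \<kappa> \<Longrightarrow> T \<noteq> T' \<Longrightarrow>
   fpair \<kappa> T T' (rr \<kappa> k) = fpair \<kappa> T T' (rr \<kappa> l) \<Longrightarrow> k = l"
  by (cases T; cases T') (auto simp: rr_def sg_def sgi_def split: if_splits)

lemma valid_rr: "2 \<le> \<kappa> \<Longrightarrow> T \<noteq> T' \<Longrightarrow> validm \<kappa> (rr \<kappa>) (\<lambda>k. fpair \<kappa> T T' (rr \<kappa> k))"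
  unfolding validm_def
proof (intro conjI allI impI)
  fix k assume k: "2 \<le> \<kappa>" "T \<noteq> T'" "k \<le> \<kappa>"
  show "fst (rr \<kappa> k) < \<kappa>" "snd (rr \<kappa> k) < \<kappa>" using rr_range k by auto
  show "fst (fpair \<kappa> T T' (rr \<kappa> k)) < \<kappa>" "snd (fpair \<kappa> T T' (rr \<kappa> k)) < \<kappa>"
    using fpair_range rr_range k by blast+
next
  fix k l assume k: "2 \<le> \<kappa>" "T \<noteq> T'" "k \<le> \<kappa>" "l \<le> \<kappa>"
  show "\<not> (fst (rr \<kappa> k) = snd (rr \<kappa> k) \<and> rr \<kappa> k = fpair \<kappa> T T' (rr \<kappa> l))"
  proof
    assume H: "fst (rr \<kappa> k) = snd (rr \<kappa> k) \<and> rr \<kappa> k = fpair \<kappa> T T' (rr \<kappa> l)"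
    then have "k = 0" using rr_diag k by blast
    then have "rr \<kappa> k = (0, 0)" by (simp add: rr_def)
    then show False using H fpair_rr_nz k by metis
  qed
qed

lemma minor_x0_nz:
  assumes k: "2 \<le> \<kappa>" and TT: "T \<noteq> T'"
  shows "minor \<kappa> T' (rr \<kappa>) (\<lambda>k. fpair \<kappa> T T' (rr \<kappa> k)) (gphi \<kappa> T (cvec (x0 \<kappa>))) \<noteq> 0"
proof -
  let ?n = "Suc \<kappa>"
  let ?c = "complex_of_real (1 / (real \<kappa> * real \<kappa>))"
  have ent: "gphi \<kappa> T (cvec (x0 \<kappa>)) (assign T' (rr \<kappa> i) (fpair \<kappa> T T' (rr \<kappa> j))) = (if i = j then ?c else 0)"
    if i: "i < ?n" and j: "j < ?n" for i j
  proof -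
    obtain p1 p2 where p: "rr \<kappa> i = (p1, p2)" by fastforce
    obtain q1 q2 where q: "fpair \<kappa> T T' (rr \<kappa> j) = (q1, q2)" by fastforce
    have pr: "p1 < \<kappa>" "p2 < \<kappa>" using rr_range[OF k, of i] i p by auto
    have qr: "q1 < \<kappa>" "q2 < \<kappa>" using fpair_range[OF k, of "rr \<kappa> j" T T'] rr_range[OF k, of j] j q by auto
    have "(q1, q2) = fpair \<kappa> T T' (p1, p2) \<longleftrightarrow> i = j"
      using fpair_rr_inj[OF k _ _ TT, of i j] i j p q by auto
    then show ?thesis
      unfolding gphi_of_real p q phi_x0_assign[OF k TT pr qr] by simp
  qed
  have M: "mat ?n ?n (\<lambda>(k, l). gphi \<kappa> T (cvec (x0 \<kappa>)) (assign T' (rr \<kappa> k) (fpair \<kappa> T T' (rr \<kappa> l))))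
      = ?c \<cdot>\<^sub>m 1\<^sub>m ?n"
    by (rule eq_matI) (simp_all add: ent)
  have "?c \<noteq> 0" using k by simp
  then show ?thesis unfolding minor_def M by simp
qed


lemma cz_cvec: "x \<in> rspace N \<Longrightarrow> cz N (cvec x) = cvec x"
  by (auto simp: cz_def cvec_def rspace_def)

lemma gphi_cvec_eq: "gphi \<kappa> T (cvec x) = (\<lambda>s. complex_of_real (gm_phi \<kappa> T x s))"
  by (rule ext) (simp add: gphi_of_real gm_phi_gphi)

lemma x0_rspace: "2 \<le> \<kappa> \<Longrightarrow> x0 \<kappa> \<in> rspace (nparams \<kappa>)"
  unfolding rspace_def x0_def nparams_def by auto

lemma other_two: "\<exists>T1 T2. T1 \<noteq> T \<and> T2 \<noteq> T \<and> T1 \<noteq> (T2::quartet)"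
proof (cases T)
  case T_ab_cd then show ?thesis by (intro exI[of _ T_ac_bd] exI[of _ T_ad_bc]) simp
next
  case T_ac_bd then show ?thesis by (intro exI[of _ T_ab_cd] exI[of _ T_ad_bc]) simp
next
  case T_ad_bc then show ?thesis by (intro exI[of _ T_ab_cd] exI[of _ T_ac_bd]) simp
qed

lemma third: "T1 \<noteq> T \<Longrightarrow> T2 \<noteq> T \<Longrightarrow> T1 \<noteq> T2 \<Longrightarrow> T' \<noteq> T \<Longrightarrow> T' = T1 \<or> T' = (T2::quartet)"
  by (cases T; cases T'; cases T1; cases T2) auto

definition mkf :: "nat \<Rightarrow> quartet \<Rightarrow> quartet \<Rightarrow> quartet \<Rightarrow> (nat \<Rightarrow> nat \<times> nat) \<Rightarrow> (nat \<Rightarrow> nat \<times> nat)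
   \<Rightarrow> (nat \<Rightarrow> nat \<times> nat) \<Rightarrow> (nat \<Rightarrow> nat \<times> nat) \<Rightarrow> (nat \<Rightarrow> complex) \<Rightarrow> complex" where
  "mkf \<kappa> T T1 T2 r1 c1 r2 c2 = (\<lambda>z. minor \<kappa> T1 r1 c1 (gphi \<kappa> T (cz (nparams \<kappa>) z)) * minor \<kappa> T2 r2 c2 (gphi \<kappa> T (cz (nparams \<kappa>) z)))"

definition famF :: "nat \<Rightarrow> quartet \<Rightarrow> ((nat \<Rightarrow> complex) \<Rightarrow> complex) set" where
  "famF \<kappa> T = {f. \<exists>T1 T2 r1 c1 r2 c2. T1 \<noteq> T \<and> T2 \<noteq> T \<and> T1 \<noteq> T2 \<and> validm \<kappa> r1 c1 \<and> validm \<kappa> r2 c2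
      \<and> f = mkf \<kappa> T T1 T2 r1 c1 r2 c2}"

definition XX :: "nat \<Rightarrow> quartet \<Rightarrow> (nat \<Rightarrow> complex) set" where
  "XX \<kappa> T = {z \<in> cspace (nparams \<kappa>). \<forall>f\<in>famF \<kappa> T. f z = 0}"

lemma XX_proper: "2 \<le> \<kappa> \<Longrightarrow> proper_variety (nparams \<kappa>) (XX \<kappa> T)"
proof -
  assume k: "2 \<le> \<kappa>"
  let ?N = "nparams \<kappa>"
  have av: "alg_variety ?N (XX \<kappa> T)"
    unfolding alg_variety_def XX_def
  proof (rule exI[of _ "famF \<kappa> T"], rule conjI)
    show "\<forall>f\<in>famF \<kappa> T. poly_fun ?N f"
      unfolding famF_def mkf_def by (auto intro!: pf_mult pf_minor)
  qed simp
  obtain T1 T2 where t: "T1 \<noteq> T" "T2 \<noteq> T" "T1 \<noteq> T2" using other_two by blast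
  have xr: "x0 \<kappa> \<in> rspace ?N" using x0_rspace[OF k] .
  have zc: "cvec (x0 \<kappa>) \<in> cspace ?N" using xr by (auto simp: rspace_def cspace_def cvec_def)
  let ?f = "mkf \<kappa> T T1 T2 (rr \<kappa>) (\<lambda>k. fpair \<kappa> T T1 (rr \<kappa> k)) (rr \<kappa>) (\<lambda>k. fpair \<kappa> T T2 (rr \<kappa> k))"
  have v1: "validm \<kappa> (rr \<kappa>) (\<lambda>k. fpair \<kappa> T T1 (rr \<kappa> k))" using valid_rr[OF k] t(1) by metis
  have v2: "validm \<kappa> (rr \<kappa>) (\<lambda>k. fpair \<kappa> T T2 (rr \<kappa> k))" using valid_rr[OF k] t(2) by metis
  have fF: "?f \<in> famF \<kappa> T"
    unfolding famF_def mem_Collect_eq using t v1 v2 by blast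
  have "?f (cvec (x0 \<kappa>)) \<noteq> 0"
    unfolding mkf_def cz_cvec[OF xr] using minor_x0_nz[OF k] t by simp
  then have "cvec (x0 \<kappa>) \<notin> XX \<kappa> T" using fF unfolding XX_def by blast
  then have "XX \<kappa> T \<subset> cspace ?N" using zc unfolding XX_def by blast
  then show ?thesis using av unfolding proper_variety_def by blast
qed

lemma XX_unique:
  assumes k: "2 \<le> \<kappa>" and P1: "P \<in> gm_image \<kappa> T (XX \<kappa> T)" and P2: "P \<in> gm_image \<kappa> T' (XX \<kappa> T')"
  shows "T = T'"
proof (rule ccontr)
  assume TT: "T \<noteq> T'"
  let ?N = "nparams \<kappa>"
  obtain x where x: "x \<in> stoch_params \<kappa>" "cvec x \<notin> XX \<kappa> T" "P = gm_phi \<kappa> T x"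
    using P1 unfolding gm_image_def by blast
  obtain y where y: "y \<in> stoch_params \<kappa>" "P = gm_phi \<kappa> T' y"
    using P2 unfolding gm_image_def by blast
  have xr: "x \<in> rspace ?N" using x(1) by (simp add: stoch_params_def)
  have zc: "cvec x \<in> cspace ?N" using xr by (auto simp: rspace_def cspace_def cvec_def)
  then obtain f where f: "f \<in> famF \<kappa> T" "f (cvec x) \<noteq> 0" using x(2) unfolding XX_def by blast
  then obtain T1 T2 r1 c1 r2 c2 where t: "T1 \<noteq> T" "T2 \<noteq> T" "T1 \<noteq> T2" "validm \<kappa> r1 c1" "validm \<kappa> r2 c2"
    and fe: "f = (\<lambda>z. minor \<kappa> T1 r1 c1 (gphi \<kappa> T (cz ?N z)) * minor \<kappa> T2 r2 c2 (gphi \<kappa> T (cz ?N z)))"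
    unfolding famF_def mkf_def by blast
  have eq: "gphi \<kappa> T (cz ?N (cvec x)) = gphi \<kappa> T' (cvec y)"
    unfolding cz_cvec[OF xr] gphi_cvec_eq x(3)[symmetric] y(2)[symmetric] ..
  have nz: "minor \<kappa> T1 r1 c1 (gphi \<kappa> T' (cvec y)) \<noteq> 0" "minor \<kappa> T2 r2 c2 (gphi \<kappa> T' (cvec y)) \<noteq> 0"
    using f(2) unfolding fe eq by auto
  have "T' = T1 \<or> T' = T2" using third[OF t(1-3), of T'] TT by metis
  then show False
  proof
    assume e: "T' = T1"
    have "minor \<kappa> T1 r1 c1 (gphi \<kappa> T1 (cvec y)) = 0" by (rule minor_vanish[OF t(4)])
    then show False using nz(1) unfolding e by blast
  next
    assume e: "T' = T2"
    have "minor \<kappa> T2 r2 c2 (gphi \<kappa> T2 (cvec y)) = 0" by (rule minor_vanish[OF t(5)])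
    then show False using nz(2) unfolding e by blast
  qed
qed

theorem proposition11:
  fixes \<kappa> :: nat
  assumes "2 \<le> \<kappa>"
  shows "\<exists>X :: quartet \<Rightarrow> (nat \<Rightarrow> complex) set.
           (\<forall>T. proper_variety (nparams \<kappa>) (X T)) \<and>
           (\<forall>P. (\<exists>T. P \<in> gm_image \<kappa> T (X T)) \<longrightarrow> (\<exists>!T. P \<in> gm_image \<kappa> T (X T)))"
proof (intro exI[of _ "XX \<kappa>"] conjI allI impI)
  fix T show "proper_variety (nparams \<kappa>) (XX \<kappa> T)" using XX_proper[OF assms] .
next
  fix P assume "\<exists>T. P \<in> gm_image \<kappa> T (XX \<kappa> T)"
  then show "\<exists>!T. P \<in> gm_image \<kappa> T (XX \<kappa> T)" using XX_unique[OF assms] by blast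
qed

end
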